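(* There is an absolute constant $c_1>0$ such that for each $b\in(0,\pi]$, each $n\in\mathbb{N}$, any linear function $l(x)=ax+k$ ($a,k\in\mathbb{R}$) and every trigonometric polynomial $T_n\in\mathcal{T}_n$, $$\|F_1+l-T_n\|_{[-b,b]}\ge\frac{c_1 b}{n},$$ where $F_1(x)=|x|$.
   Context: $\mathcal{T}_n$ is the space of real trigonometric polynomials of degree $\le n$. For a function $g$ on $[a,b]$, $\|g\|_{[a,b]}:=\max_{x\in[a,b]}|g(x)|$. *)

theory Defs
  imports "HOL-Analysis.Analysis"
begin

definition trig_poly :: "nat \<Rightarrow> (real \<Rightarrow> real) set" where
  "trig_poly n = {T. \<exists>a b :: nat \<Rightarrow> real. \<forall>x.
      T x = a 0 + (\<Sum>k=1..n. a k * cos (real k * x) + b k * sin (real k * x))}"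

definition sup_norm_on :: "real \<Rightarrow> real \<Rightarrow> (real \<Rightarrow> real) \<Rightarrow> real" where
  "sup_norm_on lo hi g = (SUP x\<in>{lo..hi}. \<bar>g x\<bar>)"

end

theory Submission
  imports Defs "HOL-Computational_Algebra.Polynomial"
begin


lemma cos_grid_sum:
  fixes q :: int and N :: nat
  assumes N: "N > 0" and q: "\<bar>q\<bar> < int N"
  shows "(\<Sum>j<N. cos (real_of_int q * (2*pi*real j/real N))) = (if q = 0 then real N else 0)"
proof (cases "q = 0")
  case True then show ?thesis by simp
next
  case False
  define z where "z = cis (2*pi*real_of_int q/real N)"
  have zj: "z ^ j = cis (real_of_int q * (2*pi*real j/real N))" for j
    unfolding z_def Complex.DeMoivre by (rule arg_cong[where f=cis]) (simp add: field_simps)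
  have "z ^ N = cis (2 * pi * real_of_int q)"
    using zj[of N] N by (simp add: field_simps)
  also have "\<dots> = 1"
    by (simp add: cis.ctr complex_eq_iff)
  finally have zN: "z ^ N = 1" .
  have "z \<noteq> 1"
  proof
    assume "z = 1"
    then have "cos (2*pi*real_of_int q/real N) = 1" unfolding z_def
      by (metis cis.sel(1) one_complex.sel(1))
    then obtain m :: int where m: "2*pi*real_of_int q/real N = real_of_int m * 2 * pi"
      using cos_one_2pi_int by blast
    then have "real_of_int q = real_of_int m * real N" using N by (simp add: field_simps)
    then have "q = m * int N" by (metis of_int_eq_iff of_int_mult of_int_of_nat_eq)
    then have "\<bar>q\<bar> = \<bar>m\<bar> * int N" by (simp add: abs_mult)
    moreover have "m \<noteq> 0" using \<open>q = m * int N\<close> False by auto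
    ultimately have "\<bar>q\<bar> \<ge> int N" by (simp add: mult_le_cancel_right1 int_one_le_iff_zero_less)
    then show False using q by simp
  qed
  then have "(\<Sum>j<N. z ^ j) = 0" using zN by (simp add: sum_gp_strict)
  then have "Re (\<Sum>j<N. z ^ j) = 0" by simp
  then show ?thesis using False by (simp add: zj)
qed

lemma sq_sum_expand:
  "(\<Sum>k\<le>m. cos (real k*t))^2 + (\<Sum>k\<le>m. sin (real k*t))^2
     = (\<Sum>k\<le>m. \<Sum>l\<le>m. cos ((real k - real l)*t))"
  by (simp add: power2_eq_square sum_product sum.distrib[symmetric] cos_diff left_diff_distrib)

definition fej :: "nat \<Rightarrow> real \<Rightarrow> real" where
  "fej m t = ((\<Sum>k\<le>m. cos (real k*t))^2 + (\<Sum>k\<le>m. sin (real k*t))^2) / real (m+1)"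

lemma fej_nonneg: "fej m t \<ge> 0"
  unfolding fej_def by simp

lemma fej_le: "fej m t \<le> real m + 1"
proof -
  have "(\<Sum>k\<le>m. \<Sum>l\<le>m. cos ((real k - real l)*t)) \<le> (\<Sum>k\<le>m. \<Sum>l\<le>m. (1::real))"
    by (intro sum_mono) simp
  also have "\<dots> = (real m + 1)^2" by (simp add: power2_eq_square algebra_simps)
  finally show ?thesis unfolding fej_def sq_sum_expand
    by (simp add: field_simps power2_eq_square add.commute)
qed

lemma count_pairs:
  assumes "p \<le> m"
  shows "(\<Sum>k\<le>m. \<Sum>l\<le>m. (if l = k + p then 1 else 0::real)) = real (m + 1 - p)"
proof -
  have "(\<Sum>k\<le>m. \<Sum>l\<le>m. (if l = k + p then 1 else 0::real)) = (\<Sum>k\<le>m. (if k + p \<le> m then 1 else 0))"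
    by (intro sum.cong refl) (simp add: sum.delta)
  also have "\<dots> = (\<Sum>k\<in>{..m} \<inter> {k. k + p \<le> m}. 1)"
    by (simp add: sum.If_cases)
  also have "{..m} \<inter> {k. k + p \<le> m} = {..m-p}" using assms by auto
  finally show ?thesis using assms by simp
qed

lemma sum2_lin: fixes c :: real shows "(\<Sum>k\<in>A. \<Sum>l\<in>B. c * (f k l + g k l)) = c * ((\<Sum>k\<in>A. \<Sum>l\<in>B. f k l) + (\<Sum>k\<in>A. \<Sum>l\<in>B. g k l))"
  by (simp add: sum_distrib_left sum.distrib distrib_left)

lemma fej_grid:
  assumes N: "N > 0" and pm: "p \<le> m" and mpN: "m + p < N"
  shows "(\<Sum>j<N. fej m (2*pi*real j/real N) * cos (real p * (2*pi*real j/real N)))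
           = real N * (1 - real p / (real m + 1))"
proof -
  define th where "th j = 2*pi*real j/real N" for j
  have inner: "(\<Sum>j<N. cos ((real k - real l) * th j) * cos (real p * th j))
      = real N / 2 * ((if l = k + p then 1 else 0) + (if k = l + p then 1 else 0))"
    if "k \<le> m" "l \<le> m" for k l
  proof -
    define q1 where "q1 = int k - int l + int p"
    define q2 where "q2 = int k - int l - int p"
    have "(\<Sum>j<N. cos ((real k - real l) * th j) * cos (real p * th j))
       = (\<Sum>j<N. (cos (real_of_int q2 * th j) + cos (real_of_int q1 * th j)) / 2)"
    proof (intro sum.cong refl)
      fix j
      have e1: "real_of_int q1 * x = (real k - real l)*x + real p * x" for x by (simp add: q1_def algebra_simps)
      have e2: "real_of_int q2 * x = (real k - real l)*x - real p * x" for x by (simp add: q2_def algebra_simps)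
      show "cos ((real k - real l) * th j) * cos (real p * th j) = (cos (real_of_int q2 * th j) + cos (real_of_int q1 * th j)) / 2"
        by (simp only: cos_times_cos e1 e2)
    qed
    also have "\<dots> = ((\<Sum>j<N. cos (real_of_int q2 * th j)) + (\<Sum>j<N. cos (real_of_int q1 * th j))) / 2"
      by (simp only: sum.distrib[symmetric] sum_divide_distrib)
    also have "\<dots> = ((if q2 = 0 then real N else 0) + (if q1 = 0 then real N else 0)) / 2"
      using cos_grid_sum[OF N, of q1] cos_grid_sum[OF N, of q2] that mpN
      unfolding th_def q1_def q2_def by auto
    also have "\<dots> = real N / 2 * ((if l = k + p then 1 else 0) + (if k = l + p then 1 else 0))"
      unfolding q1_def q2_def by auto
    finally show ?thesis .
  qed
  have "(\<Sum>j<N. fej m (th j) * cos (real p * th j))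
     = (\<Sum>j<N. (\<Sum>k\<le>m. \<Sum>l\<le>m. cos ((real k - real l) * th j) * cos (real p * th j))) / real (m+1)"
    unfolding fej_def sq_sum_expand by (simp add: sum_divide_distrib sum_distrib_right)
  also have "\<dots> = (\<Sum>k\<le>m. \<Sum>l\<le>m. \<Sum>j<N. cos ((real k - real l) * th j) * cos (real p * th j)) / real (m+1)"
    by (simp add: sum.swap[of _ "{..<N}"] sum.swap[of _ "{..<N}" "{..m}"])
  also have "\<dots> = (\<Sum>k\<le>m. \<Sum>l\<le>m. real N / 2 * ((if l = k + p then 1 else 0) + (if k = l + p then 1 else 0))) / real (m+1)"
    by (intro arg_cong[where f="\<lambda>x. x / real (m+1)"] sum.cong refl inner) auto
  also have "\<dots> = real N / 2 * ((\<Sum>k\<le>m. \<Sum>l\<le>m. (if l = k + p then 1 else 0))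
        + (\<Sum>k\<le>m. \<Sum>l\<le>m. (if k = l + p then 1 else 0))) / real (m+1)"
    by (simp only: sum2_lin)
  also have "(\<Sum>k\<le>m. \<Sum>l\<le>m. (if k = l + p then 1 else 0::real)) = (\<Sum>k\<le>m. \<Sum>l\<le>m. (if l = k + p then 1 else 0))"
    by (rule sum.swap)
  also have "real N / 2 * ((\<Sum>k\<le>m. \<Sum>l\<le>m. (if l = k + p then 1 else 0)) + (\<Sum>k\<le>m. \<Sum>l\<le>m. (if l = k + p then 1 else 0))) / real (m+1)
     = real N * (1 - real p / (real m + 1))"
  proof -
    have S: "(\<Sum>k\<le>m. \<Sum>l\<le>m. (if l = k + p then 1 else 0::real)) = real m + 1 - real p"
      using count_pairs[OF pm] pm by (simp add: of_nat_diff)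
    show ?thesis unfolding S by (simp add: field_simps)
  qed
  finally show ?thesis unfolding th_def .
qed

definition th :: "nat \<Rightarrow> nat \<Rightarrow> real" where "th N j = 2*pi*real j/real N"
definition Vk :: "nat \<Rightarrow> nat \<Rightarrow> real \<Rightarrow> real" where
  "Vk n N t = (2 * fej (2*n+1) t - fej n t) / real N"
definition D2 :: "real \<Rightarrow> (real \<Rightarrow> real) \<Rightarrow> real \<Rightarrow> real" where
  "D2 h F t = F (t + h) + F (t - h) - 2 * F t"
definition LL :: "nat \<Rightarrow> nat \<Rightarrow> (real \<Rightarrow> real) \<Rightarrow> real" where
  "LL n N F = D2 (2*pi/real N) F 0 - (\<Sum>j<N. Vk n N (th N j) * D2 (2*pi/real N) F (th N j))"

lemma lin2m: fixes a b :: "nat \<Rightarrow> real" shows "(\<Sum>j\<in>A. (2 * a j - b j) / c) = (2*(\<Sum>j\<in>A. a j) - (\<Sum>j\<in>A. b j))/c"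
  by (simp add: sum_divide_distrib[symmetric] sum_subtractf sum_distrib_left)
lemma lin2p: fixes a b :: "nat \<Rightarrow> real" shows "(\<Sum>j\<in>A. (2 * a j + b j) / c) = (2*(\<Sum>j\<in>A. a j) + (\<Sum>j\<in>A. b j))/c"
  by (simp add: sum_divide_distrib[symmetric] sum.distrib sum_distrib_left)

lemma V_grid:
  assumes N: "3*n + 2 \<le> N" and p: "p \<le> n"
  shows "(\<Sum>j<N. Vk n N (th N j) * cos (real p * th N j)) = 1"
proof -
  have N0: "N > 0" using N by simp
  have a: "(\<Sum>j<N. fej (2*n+1) (th N j) * cos (real p * th N j)) = real N * (1 - real p / (real (2*n+1) + 1))"
    unfolding th_def by (rule fej_grid) (use N p in auto)
  have b: "(\<Sum>j<N. fej n (th N j) * cos (real p * th N j)) = real N * (1 - real p / (real n + 1))"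
    unfolding th_def by (rule fej_grid) (use N p in auto)
  have "(\<Sum>j<N. Vk n N (th N j) * cos (real p * th N j))
     = (2 * (\<Sum>j<N. fej (2*n+1) (th N j) * cos (real p * th N j)) - (\<Sum>j<N. fej n (th N j) * cos (real p * th N j))) / real N"
    unfolding lin2m[symmetric] by (intro sum.cong refl) (simp add: Vk_def algebra_simps)
  also have "\<dots> = 1"
  proof -
    have e: "real (2*n+1) + 1 = 2*(real n + 1)" by simp
    have "real n + 1 > 0" by simp
    have gen: "x > 0 \<Longrightarrow> 2 * (M * (1 - P / (2*x))) - M * (1 - P / x) = M" for x M P :: real
      by (simp add: field_simps)
    have "2 * (real N * (1 - real p / (2*(real n + 1)))) - real N * (1 - real p / (real n + 1)) = real N"
      by (rule gen) simp
    then show ?thesis unfolding a b e using N0 by simp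
  qed
  finally show ?thesis .
qed

lemma V_abs_sum:
  assumes N: "3*n + 2 \<le> N"
  shows "(\<Sum>j<N. \<bar>Vk n N (th N j)\<bar>) \<le> 3"
proof -
  have N0: "N > 0" using N by simp
  have a: "(\<Sum>j<N. fej (2*n+1) (th N j) * cos (real 0 * th N j)) = real N * (1 - real 0 / (real (2*n+1) + 1))"
    unfolding th_def by (rule fej_grid) (use N in auto)
  have b: "(\<Sum>j<N. fej n (th N j) * cos (real 0 * th N j)) = real N * (1 - real 0 / (real n + 1))"
    unfolding th_def by (rule fej_grid) (use N in auto)
  have "(\<Sum>j<N. \<bar>Vk n N (th N j)\<bar>) \<le> (\<Sum>j<N. (2 * fej (2*n+1) (th N j) + fej n (th N j)) / real N)"
    unfolding Vk_def using fej_nonneg N0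
    by (intro sum_mono) (simp add: abs_le_iff divide_right_mono)
  also have "\<dots> = (2 * (\<Sum>j<N. fej (2*n+1) (th N j)) + (\<Sum>j<N. fej n (th N j))) / real N"
    by (rule lin2p)
  also have "\<dots> = 3" using a b N0 by simp
  finally show ?thesis .
qed

lemma V_bound:
  assumes N: "20*(n+1) \<le> N"
  shows "\<bar>Vk n N t\<bar> \<le> 1/4"
proof -
  have N0: "real N > 0" using N by simp
  have "\<bar>2 * fej (2*n+1) t - fej n t\<bar> \<le> 2 * fej (2*n+1) t + fej n t"
    using fej_nonneg[of "2*n+1" t] fej_nonneg[of n t] by simp
  also have "\<dots> \<le> 2 * (real (2*n+1) + 1) + (real n + 1)"
    using fej_le[of "2*n+1" t] fej_le[of n t] by simp
  also have "\<dots> \<le> real N / 4" using N by simp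
  finally show ?thesis unfolding Vk_def using N0 by (simp add: field_simps)
qed

lemma LL_add: "LL n N (\<lambda>t. F t + G t) = LL n N F + LL n N G"
proof -
  have "(\<Sum>j<N. Vk n N (th N j) * D2 (2*pi/real N) (\<lambda>t. F t + G t) (th N j))
     = (\<Sum>j<N. Vk n N (th N j) * D2 (2*pi/real N) F (th N j) + Vk n N (th N j) * D2 (2*pi/real N) G (th N j))"
    by (intro sum.cong refl) (simp add: D2_def algebra_simps)
  then have e: "(\<Sum>j<N. Vk n N (th N j) * D2 (2*pi/real N) (\<lambda>t. F t + G t) (th N j))
     = (\<Sum>j<N. Vk n N (th N j) * D2 (2*pi/real N) F (th N j)) + (\<Sum>j<N. Vk n N (th N j) * D2 (2*pi/real N) G (th N j))"
    by (simp only: sum.distrib)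
  have e0: "D2 (2*pi/real N) (\<lambda>t. F t + G t) 0 = D2 (2*pi/real N) F 0 + D2 (2*pi/real N) G 0"
    by (simp add: D2_def)
  show ?thesis unfolding LL_def e e0 by simp
qed

lemma LL_scale: "LL n N (\<lambda>t. c * F t) = c * LL n N F"
  unfolding LL_def D2_def by (simp add: algebra_simps sum_distrib_left)

lemma LL_const: "LL n N (\<lambda>t. c) = 0"
  unfolding LL_def D2_def by simp

lemma LL_sum: "finite I \<Longrightarrow> LL n N (\<lambda>t. \<Sum>i\<in>I. f i t) = (\<Sum>i\<in>I. LL n N (f i))"
proof (induction I rule: finite_induct)
  case empty then show ?case using LL_const[of n N 0] by simp
next
  case (insert x F)
  then show ?case by (simp add: LL_add)
qed

lemma LL_cos:
  assumes N: "3*n + 2 \<le> N" and p: "p \<le> n"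
  shows "LL n N (\<lambda>t. cos (real p * t)) = 0"
proof -
  define h where "h = 2*pi/real N"
  have d: "D2 h (\<lambda>t. cos (real p * t)) t = (2 * cos (real p * h) - 2) * cos (real p * t)" for t
    unfolding D2_def by (simp add: distrib_left right_diff_distrib cos_add cos_diff algebra_simps)
  have "LL n N (\<lambda>t. cos (real p * t)) = (2 * cos (real p * h) - 2) * (1 - (\<Sum>j<N. Vk n N (th N j) * cos (real p * th N j)))"
    unfolding LL_def h_def[symmetric] d by (simp add: algebra_simps sum_distrib_left)
  then show ?thesis using V_grid[OF N p] by simp
qed

lemma LL_bound:
  assumes N: "3*n + 2 \<le> N" and F: "\<And>t. \<bar>F t\<bar> \<le> M"
  shows "\<bar>LL n N F\<bar> \<le> 16 * M"
proof -
  define h where "h = 2*pi/real N"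
  have d: "\<bar>D2 h F t\<bar> \<le> 4 * M" for t
    unfolding D2_def using F[of "t+h"] F[of "t-h"] F[of t] by linarith
  have M0: "M \<ge> 0" using F[of 0] by linarith
  have "\<bar>\<Sum>j<N. Vk n N (th N j) * D2 h F (th N j)\<bar> \<le> (\<Sum>j<N. \<bar>Vk n N (th N j)\<bar> * (4 * M))"
    by (rule order_trans[OF sum_abs]) (intro sum_mono, simp add: abs_mult mult_left_mono d)
  also have "\<dots> = (\<Sum>j<N. \<bar>Vk n N (th N j)\<bar>) * (4 * M)" by (simp add: sum_distrib_right)
  also have "\<dots> \<le> 3 * (4 * M)" using V_abs_sum[OF N] M0 by (intro mult_right_mono) auto
  finally have s: "\<bar>\<Sum>j<N. Vk n N (th N j) * D2 h F (th N j)\<bar> \<le> 12 * M" by simp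
  show ?thesis unfolding LL_def h_def[symmetric] using d[of 0] s by linarith
qed

lemma cos_pow:
  "cos t ^ i = (\<Sum>l\<le>i. real (i choose l) * cos ((real l - real (i - l)) * t)) / 2 ^ i"
proof -
  have c: "complex_of_real (cos t) = (cis t + cis (-t)) / 2"
    by (simp add: complex_eq_iff)
  have "complex_of_real (cos t ^ i) = (cis t + cis (-t)) ^ i / 2 ^ i"
    by (simp add: c power_divide)
  also have "(cis t + cis (-t)) ^ i = (\<Sum>l\<le>i. of_nat (i choose l) * cis t ^ l * cis (-t) ^ (i - l))"
    by (rule binomial_ring)
  also have "\<dots> = (\<Sum>l\<le>i. of_nat (i choose l) * cis ((real l - real (i - l)) * t))"
    by (intro sum.cong refl) (simp add: Complex.DeMoivre cis_mult algebra_simps)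
  finally have "complex_of_real (cos t ^ i) = (\<Sum>l\<le>i. of_nat (i choose l) * cis ((real l - real (i - l)) * t)) / 2 ^ i" .
  then have "Re (complex_of_real (cos t ^ i)) = Re ((\<Sum>l\<le>i. of_nat (i choose l) * cis ((real l - real (i - l)) * t)) / 2 ^ i)"
    by simp
  then show ?thesis by (simp add: Re_divide_numeral)
qed


lemma LL_cos_int:
  assumes N: "3*n + 2 \<le> N" and q: "\<bar>q\<bar> \<le> int n"
  shows "LL n N (\<lambda>t. cos (real_of_int q * t)) = 0"
proof -
  have "(\<lambda>t. cos (real_of_int q * t)) = (\<lambda>t. cos (real (nat \<bar>q\<bar>) * t))"
  proof
    fix t
    show "cos (real_of_int q * t) = cos (real (nat \<bar>q\<bar>) * t)"
    proof (cases "q \<ge> 0")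
      case True then show ?thesis by simp
    next
      case False
      then have "real (nat \<bar>q\<bar>) * t = - (real_of_int q * t)" by simp
      then show ?thesis by (metis cos_minus)
    qed
  qed
  then show ?thesis using LL_cos[OF N, of "nat \<bar>q\<bar>"] q by simp
qed

lemma LL_cospow:
  assumes N: "3*n + 2 \<le> N" and i: "i \<le> n"
  shows "LL n N (\<lambda>t. cos t ^ i) = 0"
proof -
  have e: "(\<lambda>t. cos t ^ i) = (\<lambda>t. (1 / 2 ^ i) * (\<Sum>l\<le>i. real (i choose l) * cos (real_of_int (int l - int (i - l)) * t)))"
    by (rule ext, subst cos_pow) simp
  have z: "LL n N (\<lambda>t. real (i choose l) * cos (real_of_int (int l - int (i - l)) * t)) = 0" if "l \<le> i" for l
    unfolding LL_scale using LL_cos_int[OF N, of "int l - int (i - l)"] that i by simp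
  have "(\<Sum>l\<le>i. LL n N (\<lambda>t. real (i choose l) * cos (real_of_int (int l - int (i - l)) * t))) = 0"
    by (intro sum.neutral ballI z) simp
  then show ?thesis unfolding e LL_scale LL_sum[OF finite_atMost] by simp
qed

lemma LL_poly:
  assumes N: "3*n + 2 \<le> N" and Q: "degree Q \<le> n"
  shows "LL n N (\<lambda>t. poly Q (cos t)) = 0"
proof -
  have e: "(\<lambda>t. poly Q (cos t)) = (\<lambda>t. \<Sum>i\<le>degree Q. coeff Q i * cos t ^ i)"
    by (rule ext) (simp add: poly_altdef)
  have "LL n N (\<lambda>t. coeff Q i * cos t ^ i) = 0" if "i \<in> {..degree Q}" for i
    unfolding LL_scale using LL_cospow[OF N, of i] that Q by simp
  then show ?thesis unfolding e LL_sum[OF finite_atMost] by (intro sum.neutral ballI) simp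
qed


fun cheb :: "nat \<Rightarrow> real poly" where
  "cheb 0 = 1"
| "cheb (Suc 0) = [:0, 1:]"
| "cheb (Suc (Suc n)) = [:0, 2:] * cheb (Suc n) - cheb n"

lemma cheb_cos: "poly (cheb n) (cos x) = cos (real n * x)"
proof (induction n rule: cheb.induct)
  case (3 n)
  have "cos ((real n + 1) * x + x) + cos ((real n + 1) * x - x) = 2 * cos ((real n + 1) * x) * cos x"
    by (simp add: cos_add cos_diff)
  moreover have "(real n + 1) * x + x = real (Suc (Suc n)) * x" "(real n + 1) * x - x = real n * x"
    by (simp_all add: algebra_simps)
  ultimately show ?case using 3 by (simp add: algebra_simps)
qed auto

lemma cheb_deg: "degree (cheb n) \<le> n"
proof (induction n rule: cheb.induct)
  case (3 n)
  have "degree ([:0, 2:] * cheb (Suc n)) \<le> Suc (Suc n)"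
    using degree_mult_le[of "[:0, 2:]" "cheb (Suc n)"] 3(1) by simp
  then show ?case using 3(2) by (simp add: degree_diff_le)
qed auto

lemma even_part_poly:
  assumes "T \<in> trig_poly n"
  shows "\<exists>P. degree P \<le> n \<and> (\<forall>x. (T x + T (-x)) / 2 = poly P (cos x))"
proof -
  from assms obtain a b :: "nat \<Rightarrow> real" where
    T: "\<And>x. T x = a 0 + (\<Sum>k=1..n. a k * cos (real k * x) + b k * sin (real k * x))"
    unfolding trig_poly_def by blast
  define P where "P = [:a 0:] + (\<Sum>k=1..n. smult (a k) (cheb k))"
  have "degree P \<le> n" unfolding P_def
    by (intro degree_add_le degree_sum_le) (auto intro: order_trans[OF degree_smult_le] order_trans[OF cheb_deg])
  moreover have "(T x + T (-x)) / 2 = poly P (cos x)" for x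
  proof -
    have Tm: "T (-x) = a 0 + (\<Sum>k=1..n. a k * cos (real k * x) - b k * sin (real k * x))"
      unfolding T by simp
    have "T x + T (-x) = 2 * a 0 + ((\<Sum>k=1..n. a k * cos (real k * x) + b k * sin (real k * x))
         + (\<Sum>k=1..n. a k * cos (real k * x) - b k * sin (real k * x)))"
      unfolding Tm T[of x] by simp
    also have "(\<Sum>k=1..n. a k * cos (real k * x) + b k * sin (real k * x))
         + (\<Sum>k=1..n. a k * cos (real k * x) - b k * sin (real k * x))
         = (\<Sum>k=1..n. 2 * (a k * cos (real k * x)))"
      unfolding sum.distrib[symmetric] by (intro sum.cong refl) simp
    finally have "T x + T (-x) = 2 * a 0 + (\<Sum>k=1..n. 2 * (a k * cos (real k * x)))" .
    moreover have "(\<Sum>k=1..n. 2 * (a k * cos (real k * x))) = 2 * (\<Sum>k=1..n. a k * cos (real k * x))"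
      by (simp add: sum_distrib_left)
    ultimately show ?thesis unfolding P_def by (simp add: poly_sum cheb_cos)
  qed
  ultimately show ?thesis by blast
qed



definition Phi :: "real \<Rightarrow> real \<Rightarrow> real" where "Phi s t = 2 * arcsin (s * sin (t / 2))"

lemma Phi_cos:
  assumes "0 \<le> s" "s \<le> 1"
  shows "cos (Phi s t) = (1 - s^2) + s^2 * cos t"
proof -
  have b: "\<bar>s * sin (t/2)\<bar> \<le> 1" using assms
    by (simp add: abs_mult mult_le_one)
  have "cos (Phi s t) = 1 - 2 * (sin (arcsin (s * sin (t / 2))))^2"
    unfolding Phi_def by (simp add: cos_double_sin)
  also have "\<dots> = 1 - s^2 * (2 * (sin (t/2))^2)" using b by (simp add: power_mult_distrib)
  also have "2 * (sin (t/2))^2 = 1 - cos t"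
    using cos_double_sin[of "t/2"] by simp
  finally show ?thesis by (simp add: algebra_simps)
qed

lemma Phi_abs_le:
  assumes "0 < b" "b \<le> 3"
  shows "\<bar>Phi (sin (b/2)) t\<bar> \<le> b"
proof -
  define s where "s = sin (b/2)"
  have s0: "0 \<le> s" "s \<le> 1" unfolding s_def using assms pi_gt3 by (auto intro!: sin_ge_zero)
  have z: "\<bar>s * sin (t/2)\<bar> \<le> s" using s0 by (simp add: abs_mult mult_left_le)
  then have "arcsin (s * sin (t/2)) \<le> arcsin s" "arcsin (- s) \<le> arcsin (s * sin (t/2))"
    using s0 by (subst arcsin_le_mono; auto)+
  moreover have "arcsin s = b/2" unfolding s_def
    by (intro arcsin_sin) (use assms pi_gt3 in auto)
  moreover have "arcsin (- s) = - arcsin s" using s0 by (intro arcsin_minus) auto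
  ultimately show ?thesis unfolding Phi_def s_def[symmetric] by simp
qed

lemma Phi_odd: assumes "0 \<le> s" "s \<le> 1" shows "Phi s (-t) = - Phi s t"
proof -
  have "\<bar>s * sin (t/2)\<bar> \<le> 1" using assms by (simp add: abs_mult mult_le_one)
  then show ?thesis unfolding Phi_def using arcsin_minus[of "s * sin (t/2)"] by simp
qed

lemma Phi_nonneg:
  assumes "0 \<le> s" "s \<le> 1" "0 \<le> t" "t \<le> 2*pi"
  shows "Phi s t \<ge> 0"
proof -
  have "sin (t/2) \<ge> 0" using assms by (intro sin_ge_zero) auto
  then have "0 \<le> s * sin (t/2)" "s * sin (t/2) \<le> 1" using assms by (auto simp: mult_le_one)
  then show ?thesis unfolding Phi_def using arcsin_nonneg by simp
qed

lemma Phi_lower: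
  assumes "0 \<le> s" "s \<le> 1" "0 \<le> t" "t \<le> 2*pi"
  shows "Phi s t \<ge> 2 * s * sin (t/2)"
proof -
  have "sin (t/2) \<ge> 0" using assms by (intro sin_ge_zero) auto
  then have z: "0 \<le> s * sin (t/2)" "s * sin (t/2) \<le> 1" using assms by (auto simp: mult_le_one)
  then have "sin (arcsin (s * sin (t/2))) \<le> arcsin (s * sin (t/2))"
    by (intro sin_x_le_x arcsin_nonneg) (use z in auto)
  then show ?thesis unfolding Phi_def using z arcsin_nonneg by simp
qed



lemma gen_e: "- (2 * (inverse (q::real) * (s * (c / 2)))) = - (s * c / q)"
  by (simp add: field_simps)

lemma Phi_deriv:
  assumes "0 \<le> s" "s < 1"
  shows "((\<lambda>t. - Phi s t) has_real_derivative - (s * cos (t/2) / sqrt (1 - (s * sin (t/2))^2))) (at t)"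
proof -
  have b: "\<bar>s * sin (t/2)\<bar> < 1" using assms
  proof -
    have "\<bar>s\<bar> * \<bar>sin (t/2)\<bar> \<le> \<bar>s\<bar> * 1" by (rule mult_left_mono) simp_all
    then have "\<bar>s * sin (t/2)\<bar> \<le> s" using assms by (simp only: abs_mult mult_1_right abs_of_nonneg)
    then show ?thesis using assms by simp
  qed
  have d1: "((\<lambda>x. s * sin (x/2)) has_real_derivative s * (cos (t/2) / 2)) (at t)"
    by (auto intro!: derivative_eq_intros)
  have d2: "((\<lambda>x. arcsin (s * sin (x/2))) has_real_derivative inverse (sqrt (1 - (s * sin (t/2))\<^sup>2)) * (s * (cos (t/2) / 2))) (at t)"
    by (rule DERIV_chain2[OF DERIV_arcsin d1]) (use b in auto)
  have d3: "((\<lambda>x. - (2 * arcsin (s * sin (x/2)))) has_real_derivative - (2 * (inverse (sqrt (1 - (s * sin (t/2))\<^sup>2)) * (s * (cos (t/2) / 2))))) (at t)"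
    by (rule DERIV_minus[OF DERIV_cmult[OF d2]])
  have e: "- (2 * (inverse (sqrt (1 - (s * sin (t/2))\<^sup>2)) * (s * (cos (t/2) / 2)))) = - (s * cos (t/2) / sqrt (1 - (s * sin (t/2))^2))"
    by (rule gen_e)
  show ?thesis unfolding Phi_def e[symmetric] by (rule d3)
qed

lemma k1: fixes a c d s :: real assumes "a > 0" "0 \<le> c" "c \<le> d"
  shows "c / sqrt (a + s^2*c^2) \<le> d / sqrt (a + s^2*d^2)"
proof -
  have A: "a + s^2*c^2 > 0" "a + s^2*d^2 > 0" using assms by (simp_all add: add_pos_nonneg)
  have cd: "c^2 \<le> d^2" using assms by (simp add: power_mono)
  have "c^2 * (a + s^2*d^2) \<le> d^2 * (a + s^2*c^2)"
    using cd assms(1) by (simp add: algebra_simps)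
  then have "c^2 / (a + s^2*c^2) \<le> d^2 / (a + s^2*d^2)"
    using A by (simp add: divide_le_eq le_divide_eq mult.commute)
  then have "sqrt (c^2 / (a + s^2*c^2)) \<le> sqrt (d^2 / (a + s^2*d^2))" by simp
  then show ?thesis using assms by (simp add: real_sqrt_divide)
qed
lemma kmono: fixes a c d s :: real assumes "a > 0" "c \<le> d"
  shows "c / sqrt (a + s^2*c^2) \<le> d / sqrt (a + s^2*d^2)"
proof (cases "0 \<le> c")
  case True then show ?thesis using k1 assms by blast
next
  case c: False
  show ?thesis
  proof (cases "d \<le> 0")
    case True
    have "(-d) / sqrt (a + s^2*(-d)^2) \<le> (-c) / sqrt (a + s^2*(-c)^2)"
      using k1[of a "-d" "-c" s] assms True by simp
    then show ?thesis by simp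
  next
    case False
    have "c / sqrt (a + s^2*c^2) \<le> 0" using c assms(1) by (intro divide_nonpos_nonneg) (simp_all add: add_nonneg_nonneg)
    moreover have "0 \<le> d / sqrt (a + s^2*d^2)" using False assms(1) by (intro divide_nonneg_nonneg) (simp_all add: add_nonneg_nonneg)
    ultimately show ?thesis by linarith
  qed
qed

lemma Phi_concave:
  assumes s: "0 \<le> s" "s < 1" and x: "x \<in> {0..2*pi}" and y: "y \<in> {0..2*pi}"
  shows "Phi s x + Phi s y \<le> 2 * Phi s ((x + y) / 2)"
proof -
  define g where "g t = - (s * cos (t/2) / sqrt (1 - (s * sin (t/2))^2))" for t
  have sq: "1 - (s * sin (t/2))^2 = (1 - s^2) + s^2 * (cos (t/2))^2" for t
    by (simp add: power_mult_distrib sin_squared_eq algebra_simps)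
  have a: "1 - s^2 > 0" using s by (simp add: power_less_one_iff abs_less_iff)
  have mono: "g u \<le> g v" if "u \<in> {0..2*pi}" "v \<in> {0..2*pi}" "u \<le> v" for u v
  proof -
    have "cos (v/2) \<le> cos (u/2)" using that by (intro cos_monotone_0_pi_le) auto
    then have "cos (v/2) / sqrt ((1 - s^2) + s^2 * (cos (v/2))^2) \<le> cos (u/2) / sqrt ((1 - s^2) + s^2 * (cos (u/2))^2)"
      by (rule kmono[OF a])
    then have "s * (cos (v/2) / sqrt ((1 - s^2) + s^2 * (cos (v/2))^2)) \<le> s * (cos (u/2) / sqrt ((1 - s^2) + s^2 * (cos (u/2))^2))"
      using s by (intro mult_left_mono) auto
    then show ?thesis unfolding g_def sq by simp
  qed
  have "convex_on {0..2*pi} (\<lambda>t. - Phi s t)"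
  proof (rule convex_on_realI[where f'=g])
    show "connected {0..2*pi}" by simp
    show "((\<lambda>t. - Phi s t) has_real_derivative g t) (at t)" if "t \<in> {0..2*pi}" for t
      unfolding g_def by (rule Phi_deriv[OF s])
    show "g u \<le> g v" if "u \<in> {0..2*pi}" "v \<in> {0..2*pi}" "u \<le> v" for u v
      using mono that by blast
  qed
  from convex_onD[OF this, of "1/2" x y] x y
  have "- Phi s ((1 - 1/2) * x + (1/2) * y) \<le> (1 - 1/2) * (- Phi s x) + (1/2) * (- Phi s y)"
    by simp
  moreover have "(1 - 1/2) * x + (1/2) * y = (x + y) / 2" by simp
  ultimately have "- Phi s ((x + y) / 2) \<le> (1 - 1/2) * (- Phi s x) + (1/2) * (- Phi s y)" by (simp only:)
  then show ?thesis by (simp add: field_simps)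
qed



lemma tele: "(\<Sum>j\<in>{1..<Suc m}. f (Suc j) + f (j - 1) - 2 * f j) = f (Suc m) - f m - f 1 + (f 0 :: real)"
proof (induction m)
  case 0 then show ?case by simp
next
  case (Suc m)
  have "{1..<Suc (Suc m)} = insert (Suc m) {1..<Suc m}" by auto
  then show ?case using Suc by simp
qed

lemma LL_Phi:
  assumes s: "0 \<le> s" "s < 1" and N: "20*(n+1) \<le> N"
  shows "LL n N (\<lambda>t. \<bar>Phi s t\<bar>) \<ge> Phi s (2*pi/real N)"
proof -
  define h where "h = 2*pi/real N"
  define \<phi> where "\<phi> j = Phi s (th N j)" for j
  have N0: "N > 0" "real N > 0" using N by auto
  have s1: "s \<le> 1" using s by simp
  have thS: "th N j + h = th N (Suc j)" for j unfolding th_def h_def using N0 by (simp add: field_simps)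
  have thP: "th N j - h = th N (j - 1)" if "j \<ge> 1" for j
    unfolding th_def h_def using N0 that by (simp add: field_simps of_nat_diff)
  have thR: "th N j \<in> {0..2*pi}" if "j \<le> N" for j
    unfolding th_def using N0 that by (auto simp: field_simps)
  have th0: "th N 0 = 0" unfolding th_def by simp
  have th1: "th N 1 = h" unfolding th_def h_def by simp
  have thN: "th N N = 2*pi" unfolding th_def using N0 by simp
  have thN1: "th N (N - 1) = 2*pi - h" unfolding th_def h_def using N0 by (simp add: field_simps of_nat_diff)
  have absPhi: "\<bar>Phi s t\<bar> = Phi s t" if "t \<in> {0..2*pi}" for t
    using Phi_nonneg[OF s(1) s1, of t] that by simp
  have hR: "h \<in> {0..2*pi}" using thR[of 1] th1 N by simp
  have Phih: "Phi s h \<ge> 0" using absPhi[OF hR] by (metis abs_ge_zero)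
  have phiN: "\<phi> N = 0" unfolding \<phi>_def thN Phi_def by simp
  have phiN1: "\<phi> (N - 1) = Phi s h"
  proof -
    have "sin ((2*pi - h)/2) = sin (h/2)"
      by (metis diff_divide_distrib mult.commute nonzero_mult_div_cancel_left sin_pi_minus zero_neq_numeral)
    then show ?thesis unfolding \<phi>_def thN1 Phi_def by simp
  qed
  have phi0: "\<phi> 0 = 0" unfolding \<phi>_def th0 Phi_def by simp
  have phi1: "\<phi> 1 = Phi s h" unfolding \<phi>_def th1 ..
  define D where "D j = D2 h (\<lambda>t. \<bar>Phi s t\<bar>) (th N j)" for j
  have D0: "D 0 = 2 * Phi s h"
    unfolding D_def D2_def th0 using absPhi[OF hR] Phi_odd[OF s(1) s1, of h] by (simp add: Phi_def)
  have Dj: "D j = \<phi> (Suc j) + \<phi> (j - 1) - 2 * \<phi> j" if "1 \<le> j" "j < N" for j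
  proof -
    have "th N (Suc j) \<in> {0..2*pi}" "th N (j - 1) \<in> {0..2*pi}" "th N j \<in> {0..2*pi}"
      using thR that by auto
    then show ?thesis unfolding D_def D2_def \<phi>_def thS thP[OF that(1)] using absPhi by simp
  qed
  have Dneg: "D j \<le> 0" if "1 \<le> j" "j < N" for j
  proof -
    have "th N (Suc j) \<in> {0..2*pi}" "th N (j - 1) \<in> {0..2*pi}"
      using thR that by auto
    moreover have "(th N (j - 1) + th N (Suc j)) / 2 = th N j"
      using thS[of j] thP[OF that(1)] by simp
    ultimately have "Phi s (th N (j - 1)) + Phi s (th N (Suc j)) \<le> 2 * Phi s (th N j)"
      using Phi_concave[OF s] by metis
    then show ?thesis unfolding Dj[OF that] \<phi>_def by simp
  qed
  have sumD: "(\<Sum>j\<in>{1..<N}. D j) = - 2 * Phi s h"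
  proof -
    obtain m where m: "N = Suc m" using N0 by (cases N) auto
    have "(\<Sum>j\<in>{1..<N}. D j) = (\<Sum>j\<in>{1..<N}. \<phi> (Suc j) + \<phi> (j - 1) - 2 * \<phi> j)"
      by (intro sum.cong refl Dj) auto
    also have "\<dots> = \<phi> N - \<phi> (N - 1) - \<phi> 1 + \<phi> 0" unfolding m using tele[of \<phi> m] by simp
    finally show ?thesis using phiN phiN1 phi0 phi1 by simp
  qed
  have Vb: "\<bar>Vk n N t\<bar> \<le> 1/4" for t by (rule V_bound[OF N])
  have t1: "Vk n N (th N j) * D j \<le> 1/4 * (- D j)" if "1 \<le> j" "j < N" for j
  proof -
    have "Vk n N (th N j) * D j \<le> \<bar>Vk n N (th N j)\<bar> * \<bar>D j\<bar>" by (simp add: abs_mult[symmetric])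
    also have "\<dots> \<le> 1/4 * \<bar>D j\<bar>" by (intro mult_right_mono Vb) simp
    finally show ?thesis using Dneg[OF that] by simp
  qed
  have "(\<Sum>j\<in>{1..<N}. Vk n N (th N j) * D j) \<le> (\<Sum>j\<in>{1..<N}. 1/4 * (- D j))"
    by (intro sum_mono t1) auto
  also have "\<dots> = 1/4 * (- (\<Sum>j\<in>{1..<N}. D j))" by (simp only: sum_distrib_left[symmetric] sum_negf)
  also have "\<dots> = 1/2 * Phi s h" unfolding sumD by simp
  finally have s1: "(\<Sum>j\<in>{1..<N}. Vk n N (th N j) * D j) \<le> 1/2 * Phi s h" .
  have s0: "Vk n N (th N 0) * D 0 \<le> 1/2 * Phi s h"
  proof -
    have "Vk n N (th N 0) * D 0 \<le> \<bar>Vk n N (th N 0)\<bar> * \<bar>D 0\<bar>" by (simp add: abs_mult[symmetric])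
    also have "\<dots> \<le> 1/4 * \<bar>D 0\<bar>" by (intro mult_right_mono Vb) simp
    finally show ?thesis using D0 Phih by simp
  qed
  have "(\<Sum>j<N. Vk n N (th N j) * D j) = Vk n N (th N 0) * D 0 + (\<Sum>j\<in>{1..<N}. Vk n N (th N j) * D j)"
    using N0 by (simp add: lessThan_atLeast0 sum.atLeast_Suc_lessThan)
  then have "(\<Sum>j<N. Vk n N (th N j) * D j) \<le> Phi s h" using s0 s1 by simp
  moreover have "LL n N (\<lambda>t. \<bar>Phi s t\<bar>) = D 0 - (\<Sum>j<N. Vk n N (th N j) * D j)"
    unfolding LL_def D_def h_def th0 ..
  ultimately show ?thesis using D0 unfolding h_def by simp
qed



lemma jordan:
  assumes "0 \<le> x" "x \<le> pi/2"
  shows "sin x \<ge> 2 / pi * x"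
proof -
  have cvx: "convex_on {0..pi/2} (\<lambda>t. - sin t)"
  proof (rule convex_on_realI[where f'="\<lambda>t. - cos t"])
    show "connected {0..pi/2}" by simp
    show "((\<lambda>t. - sin t) has_real_derivative - cos t) (at t)" for t
      by (auto intro!: derivative_eq_intros)
    show "- cos u \<le> - cos v" if "u \<in> {0..pi/2}" "v \<in> {0..pi/2}" "u \<le> v" for u v
      using that cos_monotone_0_pi_le[of u v] by auto
  qed
  define t where "t = 2 / pi * x"
  have t: "0 \<le> t" "t \<le> 1" unfolding t_def using assms pi_gt_zero by (auto simp: field_simps)
  from convex_onD[OF cvx t, of 0 "pi/2"]
  have "- sin ((1 - t) * 0 + t * (pi/2)) \<le> (1 - t) * (- sin 0) + t * (- sin (pi/2))"
    by simp
  moreover have "(1 - t) * 0 + t * (pi/2) = x" unfolding t_def by simp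
  ultimately show ?thesis unfolding t_def by simp
qed

theorem corollary3p5:
  shows "\<exists>c1 > (0::real). \<forall>b n a k T.
     0 < b \<and> b \<le> pi \<and> n \<ge> 1 \<and> T \<in> trig_poly n \<longrightarrow>
     sup_norm_on (-b) b (\<lambda>x. \<bar>x\<bar> + (a * x + k) - T x) \<ge> c1 * b / real n"
proof (intro exI[of _ "1/1000"] conjI allI impI)
  show "(0::real) < 1/1000" by simp
  fix b :: real and n :: nat and a k :: real and T :: "real \<Rightarrow> real"
  assume H: "0 < b \<and> b \<le> pi \<and> n \<ge> 1 \<and> T \<in> trig_poly n"
  then have b: "0 < b" "b \<le> pi" and n: "n \<ge> 1" and T: "T \<in> trig_poly n" by auto
  define f where "f x = \<bar>x\<bar> + (a * x + k) - T x" for x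
  define \<epsilon> where "\<epsilon> = sup_norm_on (-b) b f"
  from T obtain A B :: "nat \<Rightarrow> real" where TA:
    "\<And>x. T x = A 0 + (\<Sum>k=1..n. A k * cos (real k * x) + B k * sin (real k * x))"
    unfolding trig_poly_def by blast
  have Tc: "continuous_on UNIV T"
  proof -
    have "T = (\<lambda>x. A 0 + (\<Sum>k=1..n. A k * cos (real k * x) + B k * sin (real k * x)))"
      using TA by auto
    then show ?thesis by (auto intro!: continuous_intros)
  qed
  have fc: "continuous_on {-b..b} (\<lambda>x. \<bar>f x\<bar>)"
    unfolding f_def by (intro continuous_intros continuous_on_subset[OF Tc]) auto
  have bdd: "bdd_above ((\<lambda>x. \<bar>f x\<bar>) ` {-b..b})"
    by (intro bounded_imp_bdd_above compact_imp_bounded compact_continuous_image fc) simp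
  have fe: "\<bar>f x\<bar> \<le> \<epsilon>" if "x \<in> {-b..b}" for x
    unfolding \<epsilon>_def sup_norm_on_def using cSUP_upper[OF that bdd] .
  obtain P where P: "degree P \<le> n" "\<And>x. (T x + T (-x)) / 2 = poly P (cos x)"
    using even_part_poly[OF T] by blast
  define b' where "b' = min b 3"
  have b': "0 < b'" "b' \<le> 3" "b' \<le> b" "b' \<ge> 3 / pi * b"
    unfolding b'_def using b pi_gt3 by (auto simp: field_simps min_def)
  define s where "s = sin (b'/2)"
  have s0: "0 \<le> s" unfolding s_def using b' pi_gt3 by (intro sin_ge_zero) auto
  have s1: "s < 1"
  proof -
    have "sin (b'/2) < sin (pi/2)" using b' pi_gt3 by (intro sin_monotone_2pi) auto
    then show ?thesis unfolding s_def by simp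
  qed
  have sge: "s \<ge> 2 / pi * (b'/2)" unfolding s_def using b' pi_gt3 by (intro jordan) auto
  define N where "N = 40 * n"
  have N: "20*(n+1) \<le> N" "3*n + 2 \<le> N" unfolding N_def using n by auto
  define Q where "Q = pcompose P [:1 - s^2, s^2:]"
  have Qd: "degree Q \<le> n"
  proof -
    have d1: "degree [:1 - s^2, s^2:] \<le> 1" by simp
    have "degree Q \<le> degree P * degree [:1 - s^2, s^2:]" unfolding Q_def by (rule degree_pcompose_le)
    also have "\<dots> \<le> degree P * 1" using d1 by (rule mult_le_mono2)
    finally show ?thesis using P(1) by simp
  qed
  define F where "F t = \<bar>Phi s t\<bar> + k + (-1) * poly Q (cos t)" for t
  have Fb: "\<bar>F t\<bar> \<le> \<epsilon>" for t
  proof -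
    define x where "x = Phi s t"
    have xb: "x \<in> {-b..b}" "-x \<in> {-b..b}"
      using Phi_abs_le[OF b'(1) b'(2), of t] b' unfolding x_def s_def by auto
    have "poly Q (cos t) = poly P (cos x)"
      unfolding Q_def x_def poly_pcompose Phi_cos[OF s0 s1[THEN less_imp_le]] by (simp add: algebra_simps)
    then have "F t = (f x + f (-x)) / 2"
      unfolding F_def f_def x_def[symmetric] using P(2)[of x] by (simp add: field_simps)
    then show ?thesis using fe[OF xb(1)] fe[OF xb(2)] by simp
  qed
  have LF: "\<bar>LL n N F\<bar> \<le> 16 * \<epsilon>" by (rule LL_bound[OF N(2) Fb])
  have "LL n N F = LL n N (\<lambda>t. \<bar>Phi s t\<bar>) + LL n N (\<lambda>t. k) + (-1) * LL n N (\<lambda>t. poly Q (cos t))"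
    unfolding F_def LL_add LL_scale ..
  also have "\<dots> = LL n N (\<lambda>t. \<bar>Phi s t\<bar>)" using LL_poly[OF N(2) Qd] LL_const by simp
  finally have "LL n N F \<ge> Phi s (2*pi/real N)" using LL_Phi[OF s0 s1 N(1)] by simp
  moreover have "Phi s (2*pi/real N) \<ge> 2 * s * sin ((2*pi/real N)/2)"
    using N pi_gt_zero by (intro Phi_lower[OF s0 s1[THEN less_imp_le]]) (auto simp: field_simps)
  moreover have "sin ((2*pi/real N)/2) \<ge> 2 / pi * ((2*pi/real N)/2)"
    using N pi_gt_zero by (intro jordan) (auto simp: field_simps)
  moreover have "2 * s * sin ((2*pi/real N)/2) \<ge> 2 * s * (2 / pi * ((2*pi/real N)/2))"
    using s0 calculation(3) by (intro mult_left_mono) auto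
  ultimately have key: "16 * \<epsilon> \<ge> 2 * s * (2 / pi * ((2*pi/real N)/2))"
    using LF by (simp add: abs_le_iff)
  have e1: "2 / pi * ((2*pi/real N)/2) = 2 / real N" using pi_gt_zero by (simp add: field_simps)
  have "2 * s * (2 / real N) \<ge> 2 * (2 / pi * (b'/2)) * (2 / real N)"
    using sge N by (intro mult_right_mono mult_left_mono) auto
  moreover have "2 / pi * (b'/2) \<ge> 2 / pi * (3 / pi * b / 2)"
    by (intro mult_left_mono divide_right_mono b'(4)) (use pi_gt_zero in auto)
  moreover have "2 * (2 / pi * (b'/2)) * (2 / real N) \<ge> 2 * (2 / pi * (3 / pi * b / 2)) * (2 / real N)"
    by (rule mult_right_mono[OF mult_left_mono[OF calculation(2)]]) auto
  ultimately have "16 * \<epsilon> \<ge> 2 * (2 / pi * (3 / pi * b / 2)) * (2 / real N)"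
    using key unfolding e1 by linarith
  then have "\<epsilon> \<ge> 3 * b / (pi * pi * real (40 * n) * 4)" unfolding N_def by (simp add: field_simps)
  moreover have "3 * b / (pi * pi * real (40 * n) * 4) \<ge> 1/1000 * b / real n"
  proof -
    have "pi * pi \<le> 4 * 4" by (intro mult_mono) (use pi_less_4 pi_gt_zero in auto)
    then have pp: "pi * pi \<le> 16" by simp
    have "pi * pi * real (40 * n) * 4 = (pi * pi) * (160 * real n)" by simp
    also have "\<dots> \<le> 16 * (160 * real n)" using pp by (intro mult_right_mono) auto
    also have "\<dots> \<le> real n * 3000" by simp
    finally have den: "pi * pi * real (40 * n) * 4 \<le> real n * 3000" .
    have "1/1000 * b / real n = 3 * b / (real n * 3000)" by simp
    also have "\<dots> \<le> 3 * b / (pi * pi * real (40 * n) * 4)"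
      using den b n pi_gt_zero by (intro divide_left_mono) auto
    finally show ?thesis by simp
  qed
  ultimately show "1/1000 * b / real n \<le> sup_norm_on (-b) b (\<lambda>x. \<bar>x\<bar> + (a * x + k) - T x)"
    unfolding \<epsilon>_def f_def by simp
qed

end
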